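(* Let $q>0$. The following statements are equivalent: (i) the weight $w_q$ is unique; (ii) $w_q(\mathbf m)=1$ for every proper loop $\mathbf m$ for $q$; (iii) $w_q(\mathbf m)=w_q(\mathbf n)$ for all non-trivial proper loops $\mathbf m,\mathbf n$ for $q$.
   Context: Let $q>0$. For $k\ge0$ and $\mathbf m=(m_0,\dots,m_k)\in\mathbb Z^{k+1}$ put $\mathbf m_j=(m_0,\dots,m_j)$; define $c(q,\mathbf m_0)=m_0$ and $c(q,\mathbf m_j)=m_j+\frac{1}{q\,c(q,\mathbf m_{j-1})}$ for $1\le j\le k$. $\mathbf m$ is a path for $q$ of length $k$ if $c(q,\mathbf m_j)\ne0$ for $0\le j\le k-1$; it is proper if $m_j\ne0$ for $0\le j\le k-1$. The weight of a path is $w_q(\mathbf m)=q^{k/2}\prod_{j=0}^{k-1}|c(q,\mathbf m_j)|$ (and $1$ if $k=0$). A loop is a path with $c(q,\mathbf m)=0$; the trivial loop is $(0)$. The weight $w_q$ is unique if $w_q(\mathbf m)=w_q(\mathbf n)$ for all paths $\mathbf m,\mathbf n$ for $q$ with $c(q,\mathbf m)=c(q,\mathbf n)$. *)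

theory Defs
  imports Complex_Main
begin

text \<open>A sequence m = (m_0,...,m_k) is an int list of length k+1.
  cseq q m j = c(q, m_j) for j < length m.\<close>
fun cseq :: "real \<Rightarrow> int list \<Rightarrow> nat \<Rightarrow> real" where
  "cseq q m 0 = real_of_int (m ! 0)"
| "cseq q m (Suc j) = real_of_int (m ! Suc j) + 1 / (q * cseq q m j)"

definition cval :: "real \<Rightarrow> int list \<Rightarrow> real" where
  "cval q m = cseq q m (length m - 1)"

definition is_path :: "real \<Rightarrow> int list \<Rightarrow> bool" where
  "is_path q m \<longleftrightarrow> m \<noteq> [] \<and> (\<forall>j < length m - 1. cseq q m j \<noteq> 0)"

definition is_proper :: "int list \<Rightarrow> bool" where
  "is_proper m \<longleftrightarrow> (\<forall>j < length m - 1. m ! j \<noteq> 0)"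

definition weight :: "real \<Rightarrow> int list \<Rightarrow> real" where
  "weight q m = q powr (real (length m - 1) / 2) * (\<Prod>j < length m - 1. \<bar>cseq q m j\<bar>)"

definition is_loop :: "real \<Rightarrow> int list \<Rightarrow> bool" where
  "is_loop q m \<longleftrightarrow> is_path q m \<and> cval q m = 0"

definition trivial_loop :: "int list" where
  "trivial_loop = [0]"

definition weight_unique :: "real \<Rightarrow> bool" where
  "weight_unique q \<longleftrightarrow> (\<forall>m n. is_path q m \<and> is_path q n \<and> cval q m = cval q n
      \<longrightarrow> weight q m = weight q n)"

end

theory Submission
  imports Defs
begin

definition stp :: "real \<Rightarrow> int \<Rightarrow> real \<times> real \<Rightarrow> real \<times> real" where
  "stp q a w = ((real_of_int a * q * fst w + snd w) / sqrt q, sqrt q * fst w)"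

fun app :: "real \<Rightarrow> int list \<Rightarrow> real \<times> real \<Rightarrow> real \<times> real" where
  "app q [] w = w"
| "app q (a # s) w = app q s (stp q a w)"

lemma app_append: "app q (xs @ ys) w = app q ys (app q xs w)"
  by (induction xs arbitrary: w) auto

lemma stp_scale: "stp q a (c * x, c * y) = (c * fst (stp q a (x, y)), c * snd (stp q a (x, y)))"
  by (simp add: stp_def field_simps)

lemma app_scale: "app q s (c * x, c * y) = (c * fst (app q s (x, y)), c * snd (app q s (x, y)))"
proof (induction s arbitrary: x y)
  case Nil then show ?case by simp
next
  case (Cons a s)
  have "app q (a # s) (c * x, c * y) = app q s (c * fst (stp q a (x, y)), c * snd (stp q a (x, y)))"
    by (simp add: stp_scale)
  also have "\<dots> = (c * fst (app q s (stp q a (x, y))), c * snd (app q s (stp q a (x, y))))"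
    using Cons.IH[of "fst (stp q a (x, y))" "snd (stp q a (x, y))"] by simp
  finally show ?case by simp
qed

lemma sq_facts: assumes "q > 0" shows "sqrt q * sqrt q = q" "sqrt q > 0" "sqrt q \<noteq> 0"
  using assms by auto

lemma merge: assumes "q > 0" shows "stp q b (stp q 0 (stp q a w)) = stp q (a + b) w"
  using sq_facts[OF assms] by (cases w) (simp add: stp_def field_simps)

lemma inv: assumes "q > 0" shows "stp q 0 (stp q (-a) (stp q 0 (stp q a w))) = w"
  using sq_facts[OF assms] by (cases w) (simp add: stp_def field_simps)

definition backl :: "int list \<Rightarrow> int list" where
  "backl n = concat (map (\<lambda>a. [0, -a, 0]) (rev n))"

lemma app_back: assumes "q > 0" shows "app q (n @ backl n) w = w"
proof (induction n arbitrary: w)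
  case Nil then show ?case by (simp add: backl_def)
next
  case (Cons a n)
  have "backl (a # n) = backl n @ [0, -a, 0]" by (simp add: backl_def)
  then have "app q ((a # n) @ backl (a # n)) w = app q [0, -a, 0] (app q (n @ backl n) (stp q a w))"
    by (simp add: app_append)
  also have "\<dots> = w" using Cons.IH inv[OF assms] by simp
  finally show ?case .
qed

lemma app_neg: "app q (map uminus s) (x, - y) =
   ((-1) ^ length s * fst (app q s (x, y)), - ((-1) ^ length s * snd (app q s (x, y))))"
proof (induction s arbitrary: x y)
  case Nil then show ?case by simp
next
  case (Cons a s)
  define X where "X = fst (stp q a (x, y))"
  define Y where "Y = snd (stp q a (x, y))"
  have e: "stp q (- a) (x, - y) = (- X, - (- Y))"
    unfolding X_def Y_def stp_def by simp (metis minus_add_distrib minus_divide_left mult.assoc mult.commute diff_conv_add_uminus)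
  have "app q (map uminus (a # s)) (x, - y) = app q (map uminus s) (- X, - (- Y))"
    using e by simp
  also have "\<dots> = ((-1) ^ length s * fst (app q s (- X, - Y)), - ((-1) ^ length s * snd (app q s (- X, - Y))))"
    by (rule Cons.IH)
  also have "app q s (- X, - Y) = ((-1) * fst (app q s (X, Y)), (-1) * snd (app q s (X, Y)))"
    using app_scale[of q s "-1" X Y] by simp
  finally show ?case by (simp add: X_def Y_def)
qed

definition vs :: "real \<Rightarrow> int list \<Rightarrow> nat \<Rightarrow> real \<times> real" where
  "vs q s j = app q (take (Suc j) s) (1, 0)"

lemma vs_Suc: assumes "Suc j < length s" shows "vs q s (Suc j) = stp q (s ! Suc j) (vs q s j)"
  using assms by (simp add: vs_def take_Suc_conv_app_nth[of "Suc j"] app_append)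

lemma vs_0: assumes "s \<noteq> []" shows "vs q s 0 = stp q (s ! 0) (1, 0)"
  using assms by (cases s) (auto simp: vs_def)

lemma vs_last: assumes "s \<noteq> []" shows "vs q s (length s - 1) = app q s (1, 0)"
  using assms by (simp add: vs_def)


lemma link:
  assumes q: "q > 0" and "j < length s" and "\<forall>i<j. fst (vs q s i) \<noteq> 0"
  shows "snd (vs q s j) \<noteq> 0 \<and> cseq q s j = fst (vs q s j) / snd (vs q s j)
         \<and> q powr (real j / 2) * (\<Prod>i<j. \<bar>cseq q s i\<bar>) = \<bar>snd (vs q s j)\<bar> / sqrt q"
  using assms(2,3)
proof (induction j)
  case 0
  have "s \<noteq> []" using 0 by auto
  then have v: "vs q s 0 = (real_of_int (s ! 0) * q / sqrt q, sqrt q)"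
    by (simp add: vs_0 stp_def)
  show ?case using sq_facts[OF q] q by (simp add: v field_simps)
next
  case (Suc j)
  define p where "p = fst (vs q s j)"
  define r where "r = snd (vs q s j)"
  define a where "a = s ! Suc j"
  have IH: "r \<noteq> 0" "cseq q s j = p / r"
     "q powr (real j / 2) * (\<Prod>i<j. \<bar>cseq q s i\<bar>) = \<bar>r\<bar> / sqrt q"
    using Suc by (auto simp: p_def r_def)
  have p0: "p \<noteq> 0" using Suc.prems(2) by (auto simp: p_def)
  have v: "vs q s (Suc j) = ((real_of_int a * q * p + r) / sqrt q, sqrt q * p)"
    using vs_Suc[OF Suc.prems(1)] by (simp add: stp_def a_def p_def r_def)
  have sq: "sqrt q * sqrt q = q" "sqrt q > 0" using sq_facts[OF q] by auto
  have c: "cseq q s (Suc j) = real_of_int a + r / (q * p)"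
    using IH(2) IH(1) by (simp add: a_def)
  have c2: "real_of_int a + r / (q * p) = (real_of_int a * q * p + r) / sqrt q / (sqrt q * p)"
    using sq q p0 by (simp add: field_simps)
  have pw: "q powr (real (Suc j) / 2) = q powr (real j / 2) * sqrt q"
    using q by (simp add: add_divide_distrib powr_add powr_half_sqrt)
  have "q powr (real (Suc j) / 2) * (\<Prod>i<Suc j. \<bar>cseq q s i\<bar>)
      = (q powr (real j / 2) * (\<Prod>i<j. \<bar>cseq q s i\<bar>)) * sqrt q * \<bar>p / r\<bar>"
    using pw IH(2) by (simp add: algebra_simps)
  also have "\<dots> = \<bar>p\<bar>" using IH(1,3) sq by (simp add: abs_divide)
  also have "\<dots> = \<bar>sqrt q * p\<bar> / sqrt q" using sq by (simp add: abs_mult)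
  finally show ?case using v c c2 sq p0 by simp
qed

lemma cseq_fst:
  assumes q: "q > 0" and "j < length s" and "\<forall>i<j. cseq q s i \<noteq> 0"
  shows "\<forall>i<j. fst (vs q s i) \<noteq> 0"
  using assms(2,3)
proof (induction j)
  case 0 then show ?case by simp
next
  case (Suc j)
  have h: "\<forall>i<j. fst (vs q s i) \<noteq> 0" using Suc by auto
  from link[OF q _ h] Suc.prems have "fst (vs q s j) \<noteq> 0" by auto
  then show ?case using h less_Suc_eq by auto
qed

lemma path_iff:
  assumes q: "q > 0"
  shows "is_path q s \<longleftrightarrow> s \<noteq> [] \<and> (\<forall>i<length s - 1. fst (vs q s i) \<noteq> 0)"
proof
  assume "is_path q s"
  then show "s \<noteq> [] \<and> (\<forall>i<length s - 1. fst (vs q s i) \<noteq> 0)"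
    using cseq_fst[OF q, of "length s - 1" s] by (auto simp: is_path_def)
next
  assume a: "s \<noteq> [] \<and> (\<forall>i<length s - 1. fst (vs q s i) \<noteq> 0)"
  show "is_path q s" unfolding is_path_def
  proof (intro conjI allI impI)
    show "s \<noteq> []" using a by simp
    fix i assume i: "i < length s - 1"
    have "\<forall>k<i. fst (vs q s k) \<noteq> 0" using a i by auto
    from link[OF q _ this] i a show "cseq q s i \<noteq> 0" by auto
  qed
qed

lemma path_facts:
  assumes q: "q > 0" and p: "is_path q s"
  shows "snd (app q s (1, 0)) \<noteq> 0"
    "cval q s = fst (app q s (1, 0)) / snd (app q s (1, 0))"
    "weight q s = \<bar>snd (app q s (1, 0))\<bar> / sqrt q"
proof -
  have ne: "s \<noteq> []" and h: "\<forall>i<length s - 1. fst (vs q s i) \<noteq> 0"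
    using p path_iff[OF q] by auto
  have l: "length s - 1 < length s" using ne by simp
  note L = link[OF q l h]
  show "snd (app q s (1, 0)) \<noteq> 0"
    "cval q s = fst (app q s (1, 0)) / snd (app q s (1, 0))"
    "weight q s = \<bar>snd (app q s (1, 0))\<bar> / sqrt q"
    using L vs_last[OF ne] by (auto simp: cval_def weight_def)
qed

lemma loop_iff:
  assumes q: "q > 0"
  shows "is_loop q s \<longleftrightarrow> s \<noteq> [] \<and> (\<forall>i<length s - 1. fst (vs q s i) \<noteq> 0)
     \<and> fst (app q s (1, 0)) = 0"
  using path_iff[OF q] path_facts[OF q] unfolding is_loop_def by auto


lemma key:
  assumes q: "q > 0" and H: "\<forall>m. is_loop q m \<and> is_proper m \<longrightarrow> weight q m = 1"
  shows "snd (app q s (1, 0)) = 0 \<Longrightarrow> \<bar>fst (app q s (1, 0))\<bar> = 1"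
proof (induction "length s" arbitrary: s rule: less_induct)
  case less
  have sq: "sqrt q * sqrt q = q" "sqrt q > 0" using sq_facts[OF q] by auto
  show ?case
  proof (cases "\<exists>i. 1 \<le> i \<and> Suc i < length s \<and> s ! i = 0")
    case True
    then obtain i where i: "1 \<le> i" "Suc i < length s" "s ! i = 0" by blast
    define A where "A = take (i - 1) s"
    define B where "B = drop (Suc (Suc i)) s"
    have d1: "drop (i - 1) s = s ! (i - 1) # drop i s"
      using i Cons_nth_drop_Suc[of "i - 1" s] by simp
    have d2: "drop i s = s ! i # drop (Suc i) s"
      using i Cons_nth_drop_Suc[of i s] by simp
    have d3: "drop (Suc i) s = s ! Suc i # B"
      using i Cons_nth_drop_Suc[of "Suc i" s] by (simp add: B_def)
    have s: "s = A @ [s ! (i - 1), 0, s ! Suc i] @ B"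
      using d1 d2 d3 i(3) append_take_drop_id[of "i - 1" s] by (simp add: A_def)
    define s' where "s' = A @ [s ! (i - 1) + s ! Suc i] @ B"
    have "app q s (1, 0) = app q s' (1, 0)"
      by (subst s) (simp add: s'_def app_append merge[OF q])
    moreover have "length s' < length s"
      using arg_cong[OF s, of length] by (simp add: s'_def)
    ultimately show ?thesis using less by metis
  next
    case False
    show ?thesis
    proof (cases "s = []")
      case True then show ?thesis by simp
    next
      case ne: False
      define k where "k = length s - 1"
      have ak: "app q s (1, 0) = vs q s k" using vs_last[OF ne] by (simp add: k_def)
      have k0: "k \<noteq> 0"
      proof
        assume "k = 0"
        then have "snd (vs q s 0) = 0" using less.prems ak by simp
        then show False using vs_0[OF ne] sq by (simp add: stp_def)
      qed
      have kk: "Suc (k - 1) = k" "k < length s" using k0 ne by (auto simp: k_def)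
      have "vs q s k = stp q (s ! k) (vs q s (k - 1))"
        using vs_Suc[of "k - 1" s q] kk by simp
      then have fk: "fst (vs q s (k - 1)) = 0" using less.prems ak sq by (simp add: stp_def)
      define j where "j = (LEAST j. fst (vs q s j) = 0)"
      have fj: "fst (vs q s j) = 0" unfolding j_def by (rule LeastI[of _ "k - 1"]) (rule fk)
      have jk: "j \<le> k - 1" unfolding j_def by (rule Least_le) (rule fk)
      have bef: "\<forall>i<j. fst (vs q s i) \<noteq> 0" unfolding j_def using not_less_Least by blast
      define t where "t = take (Suc j) s"
      have lt: "length t = Suc j" using jk k0 by (simp add: t_def k_def)
      have vt: "i \<le> j \<Longrightarrow> vs q t i = vs q s i" for i
        by (simp add: vs_def t_def min_def)
      have tne: "t \<noteq> []" using lt by auto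
      have at: "app q t (1, 0) = vs q s j" by (simp add: t_def vs_def)
      have tl: "is_loop q t"
        using loop_iff[OF q] tne lt vt bef fj at by auto
      have s0: "s ! 0 \<noteq> 0" if "0 < j"
      proof
        assume "s ! 0 = 0"
        then have "fst (vs q s 0) = 0" using vs_0[OF ne] by (simp add: stp_def)
        then show False using bef that by auto
      qed
      have tp: "is_proper t" unfolding is_proper_def
      proof (intro allI impI)
        fix i assume i: "i < length t - 1"
        then have ti: "t ! i = s ! i" using lt by (simp add: t_def)
        show "t ! i \<noteq> 0"
        proof (cases "i = 0")
          case True then show ?thesis using s0 ti i lt by auto
        next
          case False
          then show ?thesis using \<open>\<not> (\<exists>i. 1 \<le> i \<and> Suc i < length s \<and> s ! i = 0)\<close> ti i lt jk k0
            by (auto simp: k_def)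
        qed
      qed
      have "weight q t = 1" using H tl tp by blast
      moreover have "weight q t = \<bar>snd (vs q s j)\<bar> / sqrt q"
        using path_facts(3)[OF q] tl at by (simp add: is_loop_def)
      ultimately have rj: "\<bar>snd (vs q s j)\<bar> = sqrt q" using sq by simp
      define e where "e = snd (vs q s j) / sqrt q"
      have ae: "\<bar>e\<bar> = 1" using rj sq by (simp add: e_def abs_divide)
      define R where "R = drop (Suc (Suc j)) s"
      have sR: "s = t @ s ! Suc j # R"
        using Cons_nth_drop_Suc[of "Suc j" s] jk k0 append_take_drop_id[of "Suc j" s]
        by (simp add: t_def R_def k_def)
      have st: "stp q (s ! Suc j) (vs q s j) = (e * 1, e * 0)"
        using fj sq by (cases "vs q s j") (simp add: stp_def e_def)
      have as: "app q s (1, 0) = (e * fst (app q R (1, 0)), e * snd (app q R (1, 0)))"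
        by (subst sR) (simp add: app_append at st app_scale[of q R e 1 0, simplified])
      have "snd (app q R (1, 0)) = 0" using as less.prems ae by auto
      moreover have "length R < length s" using R_def ne by simp
      ultimately have "\<bar>fst (app q R (1, 0))\<bar> = 1" using less.hyps by blast
      then show ?thesis using as ae by (simp add: abs_mult)
    qed
  qed
qed


lemma vs_neg: "vs q (map uminus m) i =
   ((-1) ^ length (take (Suc i) m) * fst (vs q m i), - ((-1) ^ length (take (Suc i) m) * snd (vs q m i)))"
  using app_neg[of q "take (Suc i) m" 1 0] by (simp add: vs_def take_map)

lemma neg_loop:
  assumes q: "q > 0" and l: "is_loop q m" and p: "is_proper m"
  shows "is_loop q (map uminus m)" "is_proper (map uminus m)" "weight q (map uminus m) = weight q m"
proof -
  have ne: "m \<noteq> []" using l by (simp add: is_loop_def is_path_def)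
  have A: "app q (map uminus m) (1, 0) = 
    ((-1) ^ length m * fst (app q m (1, 0)), - ((-1) ^ length m * snd (app q m (1, 0))))"
    using app_neg[of q m 1 0] by simp
  show "is_loop q (map uminus m)"
    using l unfolding loop_iff[OF q] by (auto simp: vs_neg A)
  show "is_proper (map uminus m)" using p by (simp add: is_proper_def)
  have "is_path q (map uminus m)" using \<open>is_loop q (map uminus m)\<close> by (simp add: is_loop_def)
  then show "weight q (map uminus m) = weight q m"
    using path_facts(3)[OF q] l A by (simp add: is_loop_def abs_mult)
qed

lemma concat_vs:
  assumes q: "q > 0" and l: "is_loop q m" and nne: "n \<noteq> []"
  defines "s \<equiv> butlast m @ (last m + hd n) # tl n"
  defines "e \<equiv> snd (app q m (1, 0)) / sqrt q"
  shows "i < length m - 1 \<Longrightarrow> vs q s i = vs q m i"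
    and "vs q s (length m - 1 + i) = (e * fst (vs q n i), e * snd (vs q n i))"
proof -
  have ne: "m \<noteq> []" using l by (simp add: is_loop_def is_path_def)
  have sq: "sqrt q * sqrt q = q" "sqrt q > 0" using sq_facts[OF q] by auto
  have lb: "length (butlast m) = length m - 1" by simp
  show "i < length m - 1 \<Longrightarrow> vs q s i = vs q m i"
    by (simp add: vs_def s_def take_butlast)
  have f0: "fst (app q m (1, 0)) = 0" using l loop_iff[OF q] by auto
  have mb: "m = butlast m @ [last m]" using ne by simp
  have am: "stp q (last m) (app q (butlast m) (1, 0)) = app q m (1, 0)"
    by (subst (2) mb) (simp add: app_append)
  have z: "stp q 0 (app q m (1, 0)) = (e * 1, e * 0)"
    using f0 sq by (cases "app q m (1, 0)") (simp add: stp_def e_def)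
  have hn: "n = hd n # tl n" using nne by simp
  have "take (Suc (length m - 1 + i)) s = butlast m @ (last m + hd n) # take i (tl n)"
    by (simp add: s_def)
  then have "vs q s (length m - 1 + i) = app q (take i (tl n)) (stp q (last m + hd n) (app q (butlast m) (1, 0)))"
    by (simp add: vs_def app_append)
  also have "\<dots> = app q (take i (tl n)) (stp q (hd n) (e * 1, e * 0))"
    using merge[OF q, where a="last m" and b="hd n" and w="app q (butlast m) (1, 0)"] am z by simp
  also have "\<dots> = app q (hd n # take i (tl n)) (e * 1, e * 0)" by simp
  also have "\<dots> = (e * fst (vs q n i), e * snd (vs q n i))"
    by (subst app_scale) (subst (2 4) hn, simp add: vs_def)
  finally show "vs q s (length m - 1 + i) = (e * fst (vs q n i), e * snd (vs q n i))" .
qed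


lemma concat_loop:
  assumes q: "q > 0" and lm: "is_loop q m" and pm: "is_proper m" and m2: "length m \<ge> 2"
    and ln: "is_loop q n" and pn: "is_proper n" and n2: "length n \<ge> 2"
    and j: "last m + hd n \<noteq> 0"
  defines "s \<equiv> butlast m @ (last m + hd n) # tl n"
  shows "is_loop q s" "is_proper s" "s \<noteq> trivial_loop" "weight q s = weight q m * weight q n"
proof -
  have sq: "sqrt q * sqrt q = q" "sqrt q > 0" using sq_facts[OF q] by auto
  define k where "k = length m - 1"
  define e where "e = snd (app q m (1, 0)) / sqrt q"
  have nne: "n \<noteq> []" using n2 by auto
  have pm': "is_path q m" "is_path q n" using lm ln by (auto simp: is_loop_def)
  have e0: "e \<noteq> 0" using path_facts(1)[OF q pm'(1)] sq by (simp add: e_def)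
  have wm: "weight q m = \<bar>e\<bar>" using path_facts(3)[OF q pm'(1)] sq by (simp add: e_def abs_divide)
  note V1 = concat_vs(1)[OF q lm nne, folded s_def]
  note V2 = concat_vs(2)[OF q lm nne, folded s_def e_def]
  have ls: "length s = k + length n" using m2 nne by (simp add: s_def k_def)
  have sne: "s \<noteq> []" using ls n2 by auto
  have LM: "\<forall>i<length m - 1. fst (vs q m i) \<noteq> 0" and LN: "\<forall>i<length n - 1. fst (vs q n i) \<noteq> 0"
    and fn: "fst (app q n (1, 0)) = 0"
    using lm ln loop_iff[OF q] by auto
  have nl: "app q n (1, 0) = vs q n (length n - 1)" using vs_last[OF nne] by simp
  have as: "app q s (1, 0) = (e * fst (app q n (1, 0)), e * snd (app q n (1, 0)))"
  proof -
    have "app q s (1, 0) = vs q s (k + (length n - 1))"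
      using vs_last[OF sne] ls n2 by simp
    then show ?thesis using V2 nl by (simp add: k_def)
  qed
  have fs: "\<forall>i<length s - 1. fst (vs q s i) \<noteq> 0"
  proof (intro allI impI)
    fix i assume i: "i < length s - 1"
    show "fst (vs q s i) \<noteq> 0"
    proof (cases "i < k")
      case True then show ?thesis using V1 LM by (simp add: k_def)
    next
      case False
      then obtain i' where i': "i = k + i'" by (metis le_add_diff_inverse not_less)
      have "i' < length n - 1" using i i' ls by simp
      then show ?thesis using V2[of i'] LN e0 i' by (simp add: k_def)
    qed
  qed
  show "is_loop q s" using loop_iff[OF q] sne fs as fn by simp
  then have "is_path q s" by (simp add: is_loop_def)
  from path_facts(3)[OF q this] show "weight q s = weight q m * weight q n"
    using path_facts(3)[OF q pm'(2)] wm as by (simp add: abs_mult)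
  show "s \<noteq> trivial_loop" using ls m2 n2 by (auto simp: trivial_loop_def k_def)
  show "is_proper s" unfolding is_proper_def
  proof (intro allI impI)
    fix i assume i: "i < length s - 1"
    show "s ! i \<noteq> 0"
    proof (cases "i < k")
      case True
      then have "s ! i = m ! i" by (simp add: s_def nth_append nth_butlast k_def)
      then show ?thesis using pm True by (simp add: is_proper_def k_def)
    next
      case False
      then obtain i' where i': "i = k + i'" by (metis le_add_diff_inverse not_less)
      show ?thesis
      proof (cases i')
        case 0 then show ?thesis using i' j by (simp add: s_def nth_append k_def)
      next
        case (Suc i'')
        have "s ! i = tl n ! i''" using i' Suc by (simp add: s_def nth_append k_def)
        also have "\<dots> = n ! i'" using nne Suc by (cases n) auto
        finally show ?thesis using pn i i' ls by (simp add: is_proper_def)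
      qed
    qed
  qed
qed


lemma triv: assumes q: "q > 0" shows "is_path q [0]" "cval q [0] = 0" "weight q [0] = 1"
  using q by (auto simp: is_path_def cval_def weight_def)

lemma P2:
  assumes q: "q > 0" and H: "\<forall>m. is_loop q m \<and> is_proper m \<longrightarrow> weight q m = 1"
  shows "weight_unique q"
  unfolding weight_unique_def
proof (intro allI impI)
  fix m n assume a: "is_path q m \<and> is_path q n \<and> cval q m = cval q n"
  define u where "u = app q m (1, 0)"
  define v where "v = app q n (1, 0)"
  have u0: "snd u \<noteq> 0" and v0: "snd v \<noteq> 0" and c: "fst u / snd u = fst v / snd v"
    using path_facts[OF q] a by (auto simp: u_def v_def)
  define l where "l = snd u / snd v"
  have uv: "u = (l * fst v, l * snd v)"
  proof -
    have "fst u = fst v / snd v * snd u" using c u0 by (simp add: field_simps)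
    then show ?thesis using v0 by (cases u) (simp add: l_def field_simps)
  qed
  have bv: "app q (backl n) v = (1, 0)" using app_back[OF q, of n "(1, 0)"] by (simp add: app_append v_def)
  have "app q (m @ backl n) (1, 0) = (l * 1, l * 0)"
    using app_scale[of q "backl n" l "fst v" "snd v"] bv by (simp add: app_append flip: u_def add: uv)
  then have "\<bar>l\<bar> = 1" using key[OF q H, of "m @ backl n"] by simp
  then have "\<bar>snd u\<bar> = \<bar>snd v\<bar>" using v0 by (simp add: l_def abs_divide)
  then show "weight q m = weight q n" using path_facts(3)[OF q] a by (simp add: u_def v_def)
qed

lemma P4:
  assumes q: "q > 0" and H: "\<forall>m n. is_loop q m \<and> is_proper m \<and> m \<noteq> trivial_loop \<and>
                 is_loop q n \<and> is_proper n \<and> n \<noteq> trivial_loop \<longrightarrow> weight q m = weight q n"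
  shows "\<forall>m. is_loop q m \<and> is_proper m \<longrightarrow> weight q m = 1"
proof (intro allI impI)
  fix m assume a: "is_loop q m \<and> is_proper m"
  have ne: "m \<noteq> []" using a by (simp add: is_loop_def is_path_def)
  show "weight q m = 1"
  proof (cases "length m = 1")
    case True
    then obtain x where "m = [x]" by (cases m) auto
    then show ?thesis using q by (simp add: weight_def)
  next
    case False
    have "length m \<noteq> 0" using ne by simp
    then have m2: "length m \<ge> 2" using False by linarith
    have m0: "m ! 0 \<noteq> 0" using a m2 by (simp add: is_proper_def)
    have hm: "hd m = m ! 0" using ne by (simp add: hd_conv_nth)
    obtain n where n: "is_loop q n" "is_proper n" "length n = length m" "weight q n = weight q m"
      "last m + hd n \<noteq> 0"
    proof (cases "last m + hd m = 0")
      case True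
      have "last m + hd (map uminus m) \<noteq> 0" using True ne m0 hm by (simp add: hd_map)
      then show ?thesis using that[of "map uminus m"] neg_loop[OF q conjunct1[OF a] conjunct2[OF a]] by simp
    next
      case False then show ?thesis using that[of m] a by blast
    qed
    have n2: "length n \<ge> 2" using n(3) m2 by simp
    note C = concat_loop[OF q conjunct1[OF a] conjunct2[OF a] m2 n(1,2) n2 n(5)]
    have nt: "m \<noteq> trivial_loop" using m2 by (auto simp: trivial_loop_def)
    have "weight q (butlast m @ (last m + hd n) # tl n) = weight q m"
      using H[rule_format, of "butlast m @ (last m + hd n) # tl n" m] C(1,2,3) a nt by simp
    moreover have "weight q (butlast m @ (last m + hd n) # tl n) = weight q m * weight q m"
      using C(4) n(4) by simp
    moreover have "weight q m \<noteq> 0"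
      using path_facts[OF q] a sq_facts[OF q] by (auto simp: is_loop_def)
    ultimately show ?thesis by simp
  qed
qed

theorem lemma4:
  fixes q :: real
  assumes "q > 0"
  shows "(weight_unique q \<longleftrightarrow> (\<forall>m. is_loop q m \<and> is_proper m \<longrightarrow> weight q m = 1))
       \<and> ((\<forall>m. is_loop q m \<and> is_proper m \<longrightarrow> weight q m = 1) \<longleftrightarrow>
          (\<forall>m n. is_loop q m \<and> is_proper m \<and> m \<noteq> trivial_loop \<and>
                 is_loop q n \<and> is_proper n \<and> n \<noteq> trivial_loop \<longrightarrow> weight q m = weight q n))"
proof -
  have P1: "weight_unique q \<Longrightarrow> (\<forall>m. is_loop q m \<and> is_proper m \<longrightarrow> weight q m = 1)"
  proof (intro allI impI)
    fix m assume w: "weight_unique q" and a: "is_loop q m \<and> is_proper m"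
    then have "weight q m = weight q [0]"
      using triv[OF assms] unfolding weight_unique_def is_loop_def
      by (metis (no_types, lifting))
    then show "weight q m = 1" using triv[OF assms] by simp
  qed
  have P3: "(\<forall>m. is_loop q m \<and> is_proper m \<longrightarrow> weight q m = 1) \<Longrightarrow>
          (\<forall>m n. is_loop q m \<and> is_proper m \<and> m \<noteq> trivial_loop \<and>
                 is_loop q n \<and> is_proper n \<and> n \<noteq> trivial_loop \<longrightarrow> weight q m = weight q n)"
    by simp
  show ?thesis
  proof (intro conjI iffI)
    show "weight_unique q" if "\<forall>m. is_loop q m \<and> is_proper m \<longrightarrow> weight q m = 1"
      using P2[OF assms that] .
  qed (fact P1, fact P3, fact P4[OF assms])
qed

end
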